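(* Let $n\ge1$, $p\in\mathbb N$ with $p\ge1$, $q\in\mathbb Z$ with $p+q\ge1$, and let $A=\{a_1^{p+q},a_2^{2p+q},\ldots,a_n^{np+q}\}$ (the linear multiset, $k_i=pi+q$). Let $s=\min(m,pn+q)$ and let $\Lambda_m(A)$ be the set of tuples $(\lambda_1,\ldots,\lambda_s)$ of non-negative integers with $\sum_{i=1}^s i\lambda_i=m$ and $\sum_{i=j}^s\lambda_i\le\overline{k_j}$ for $j=1,\ldots,s$. Then $$|C_m(A)|=\sum_{\lambda\in\Lambda_m(A)}\prod_{j=1}^s\binom{\left\lfloor n-\max\!\left(1,\frac{j-q}{p}\right)\right\rfloor+1-\sum_{i=j+1}^s\lambda_i}{\lambda_j}.$$ Moreover, if $m\le n$, then $$|C_m(A)|=\sum_{\substack{\lambda_1+2\lambda_2+\cdots+s\lambda_s=m\\ \lambda_i\in\mathbb Z_{\ge0}}}\prod_{j=1}^s\binom{\left\lfloor n-\max\!\left(1,\frac{j-q}{p}\right)\right\rfloor+1-\sum_{i=j+1}^s\lambda_i}{\lambda_j},$$ the sum running over all non-negative integer solutions.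
   Context: A multiset $A=\{a_1^{k_1},\ldots,a_n^{k_n}\}$ consists of distinct elements $a_1,\ldots,a_n$ with positive integer multiplicities $k_1,\ldots,k_n$. A submultiset of $A$ is a multiset $\{a_1^{r_1},\ldots,a_n^{r_n}\}$ with integers $0\le r_i\le k_i$, of cardinality $r_1+\cdots+r_n$. $C_m(A)$ denotes the set of all submultisets of $A$ of cardinality $m$. For each integer $j\ge1$, $\overline{k_j}=|\{i\in\{1,\ldots,n\}: k_i\ge j\}|$. *)

theory Defs
  imports Complex_Main "HOL-Library.Multiset"
begin

definition gen_mset :: "nat \<Rightarrow> (nat \<Rightarrow> nat) \<Rightarrow> nat multiset" where
  "gen_mset n k = (\<Sum>i\<in>{1..n}. replicate_mset (k i) i)"

definition C :: "nat \<Rightarrow> 'a multiset \<Rightarrow> 'a multiset set" where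
  "C m A = {B. B \<subseteq># A \<and> size B = m}"

text \<open>Linear multiplicities k_i = p i + q (as naturals; positive since p+q \<ge> 1).\<close>
definition lin_k :: "nat \<Rightarrow> int \<Rightarrow> nat \<Rightarrow> nat" where
  "lin_k p q i = nat (int p * int i + q)"

definition linear_mset :: "nat \<Rightarrow> nat \<Rightarrow> int \<Rightarrow> nat multiset" where
  "linear_mset n p q = gen_mset n (lin_k p q)"

definition kbar :: "nat \<Rightarrow> (nat \<Rightarrow> nat) \<Rightarrow> nat \<Rightarrow> nat" where
  "kbar n k j = card {i\<in>{1..n}. k i \<ge> j}"

definition Lambda :: "nat \<Rightarrow> nat \<Rightarrow> nat \<Rightarrow> (nat \<Rightarrow> nat) \<Rightarrow> (nat \<Rightarrow> nat) set" where
  "Lambda s m n k = {l. (\<forall>i. i \<notin> {1..s} \<longrightarrow> l i = 0) \<and> (\<Sum>i=1..s. i * l i) = m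
      \<and> (\<forall>j\<in>{1..s}. (\<Sum>i=j..s. l i) \<le> kbar n k j)}"

definition all_solutions :: "nat \<Rightarrow> nat \<Rightarrow> (nat \<Rightarrow> nat) set" where
  "all_solutions s m = {l. (\<forall>i. i \<notin> {1..s} \<longrightarrow> l i = 0) \<and> (\<Sum>i=1..s. i * l i) = m}"

definition int_choose :: "int \<Rightarrow> nat \<Rightarrow> nat" where
  "int_choose t r = (if t < 0 then 0 else nat t choose r)"

definition lin_term :: "nat \<Rightarrow> nat \<Rightarrow> int \<Rightarrow> nat \<Rightarrow> (nat \<Rightarrow> nat) \<Rightarrow> nat" where
  "lin_term n p q s l = (\<Prod>j=1..s.
     int_choose (\<lfloor>real n - max 1 (real_of_int (int j - q) / real p)\<rfloor> + 1
                   - int (\<Sum>i=j+1..s. l i)) (l j))"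

end

theory Submission
  imports Defs "HOL-Library.FuncSet"
begin


definition R :: "nat set \<Rightarrow> nat \<Rightarrow> (nat \<Rightarrow> nat) \<Rightarrow> (nat \<Rightarrow> nat) \<Rightarrow> (nat \<Rightarrow> nat) set" where
  "R D s k l = {r. (\<forall>i. i \<notin> D \<longrightarrow> r i = 0) \<and> (\<forall>i\<in>D. r i \<le> k i \<and> r i \<le> s)
      \<and> (\<forall>j\<in>{1..s}. card {i\<in>D. r i = j} = l j)}"

definition FF :: "nat set \<Rightarrow> nat \<Rightarrow> (nat \<Rightarrow> nat) \<Rightarrow> (nat \<Rightarrow> nat) \<Rightarrow> nat" where
  "FF D s k l = (\<Prod>j=1..s. int_choose (int (card {i\<in>D. k i \<ge> j}) - int (\<Sum>i=j+1..s. l i)) (l j))"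

lemma finite_bfun:
  assumes "finite D"
  shows "finite {r::nat\<Rightarrow>nat. (\<forall>i. i \<notin> D \<longrightarrow> r i = 0) \<and> (\<forall>i\<in>D. r i \<le> b)}"
proof -
  have "{r::nat\<Rightarrow>nat. (\<forall>i. i \<notin> D \<longrightarrow> r i = 0) \<and> (\<forall>i\<in>D. r i \<le> b)}
     \<subseteq> (\<lambda>f i. if i \<in> D then f i else 0) ` (PiE D (\<lambda>_. {0..b}))"
  proof
    fix r assume r: "r \<in> {r::nat\<Rightarrow>nat. (\<forall>i. i \<notin> D \<longrightarrow> r i = 0) \<and> (\<forall>i\<in>D. r i \<le> b)}"
    have "r = (\<lambda>i. if i \<in> D then restrict r D i else 0)"
    proof
      fix i show "r i = (if i \<in> D then restrict r D i else 0)" using r by (cases "i \<in> D") auto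
    qed
    moreover have "restrict r D \<in> PiE D (\<lambda>_. {0..b})" using r by auto
    ultimately show "r \<in> (\<lambda>f i. if i \<in> D then f i else 0) ` (PiE D (\<lambda>_. {0..b}))" by blast
  qed
  moreover have "finite (PiE D (\<lambda>_. {0..b::nat}))" using assms by (simp add: finite_PiE)
  ultimately show ?thesis by (meson finite_imageI finite_subset)
qed

lemma finite_R: "finite D \<Longrightarrow> finite (R D s k l)"
  by (rule finite_subset[OF _ finite_bfun[of D s]]) (auto simp: R_def)

lemma card_R: "finite D \<Longrightarrow> card (R D s k l) = FF D s k l"
proof (induction s arbitrary: D)
  case 0
  have "R D 0 k l = {\<lambda>i. 0}" by (auto simp: R_def)
  then show ?case by (simp add: FF_def)
next
  case (Suc s)
  define t where "t = Suc s"
  define Dt where "Dt = {i\<in>D. k i \<ge> t}"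
  define SS where "SS = {S. S \<subseteq> Dt \<and> card S = l t}"
  define g where "g = (\<lambda>S (r::nat\<Rightarrow>nat) i. if i \<in> S then t else r i)"
  have fD: "finite D" by fact
  have fDt: "finite Dt" using fD by (simp add: Dt_def)
  have SSD: "S \<subseteq> D" if "S \<in> SS" for S using that by (auto simp: SS_def Dt_def)
  have lev: "{i\<in>D. g S r i = t} = S" if "S \<in> SS" "r \<in> R (D - S) s k l" for S r
    using that SSD[OF that(1)] by (force simp: g_def R_def t_def)
  have eq: "R D t k l = (\<Union>S\<in>SS. g S ` R (D - S) s k l)"
  proof
    show "R D t k l \<subseteq> (\<Union>S\<in>SS. g S ` R (D - S) s k l)"
    proof
      fix r assume r: "r \<in> R D t k l"
      define S where "S = {i\<in>D. r i = t}"
      define r' where "r' = (\<lambda>i. if i \<in> S then 0 else r i)"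
      have "S \<in> SS" using r by (force simp: SS_def S_def Dt_def R_def t_def)
      moreover have "r' \<in> R (D - S) s k l"
      proof -
        have "\<forall>j\<in>{1..s}. {i\<in>D - S. r' i = j} = {i\<in>D. r i = j}"
          by (auto simp: r'_def S_def t_def)
        then show ?thesis using r by (auto simp: R_def r'_def S_def t_def le_Suc_eq)
      qed
      moreover have "r = g S r'" by (auto simp: g_def r'_def S_def)
      ultimately show "r \<in> (\<Union>S\<in>SS. g S ` R (D - S) s k l)" by blast
    qed
  next
    show "(\<Union>S\<in>SS. g S ` R (D - S) s k l) \<subseteq> R D t k l"
    proof safe
      fix S r' assume S: "S \<in> SS" and r': "r' \<in> R (D - S) s k l"
      have lv: "{i\<in>D. g S r' i = t} = S" by (rule lev[OF S r'])
      have "\<forall>j\<in>{1..s}. {i\<in>D. g S r' i = j} = {i\<in>D - S. r' i = j}"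
        by (auto simp: g_def t_def)
      moreover have "\<forall>i. i \<notin> D \<longrightarrow> g S r' i = 0" using r' SSD[OF S] by (auto simp: g_def R_def)
      moreover have "\<forall>i\<in>D. g S r' i \<le> k i \<and> g S r' i \<le> t"
      proof
        fix i assume i: "i \<in> D"
        show "g S r' i \<le> k i \<and> g S r' i \<le> t"
        proof (cases "i \<in> S")
          case True then show ?thesis using S by (auto simp: g_def SS_def Dt_def)
        next
          case False then have "i \<in> D - S" using i by simp
          moreover have "\<forall>i\<in>D - S. r' i \<le> k i \<and> r' i \<le> s" using r' by (simp add: R_def)
          ultimately have "r' i \<le> k i \<and> r' i \<le> s" by blast
          then show ?thesis using False by (auto simp: g_def t_def)
        qed
      qed
      moreover have "card {i\<in>D. g S r' i = t} = l t" using lv S by (simp add: SS_def)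
      ultimately show "g S r' \<in> R D t k l" using r'
        unfolding R_def t_def by (auto simp: le_Suc_eq)
    qed
  qed
  have fSS: "finite SS" using fDt by (auto simp: SS_def intro: finite_subset[of _ "Pow Dt"])
  have inj: "inj_on (g S) (R (D - S) s k l)" if "S \<in> SS" for S
  proof (rule inj_onI)
    fix r1 r2 assume "r1 \<in> R (D - S) s k l" "r2 \<in> R (D - S) s k l" "g S r1 = g S r2"
    then show "r1 = r2" by (auto simp: R_def g_def fun_eq_iff) (metis)
  qed
  have cardD: "card {i\<in>D - S. k i \<ge> j} = card {i\<in>D. k i \<ge> j} - l t"
    if "S \<in> SS" "j \<le> s" for S j
  proof -
    have "{i\<in>D - S. k i \<ge> j} = {i\<in>D. k i \<ge> j} - S" by auto
    moreover have "S \<subseteq> {i\<in>D. k i \<ge> j}" using that by (auto simp: SS_def Dt_def t_def)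
    ultimately show ?thesis using that fD by (simp add: card_Diff_subset finite_subset SS_def)
  qed
  have cle: "l t \<le> card {i\<in>D. k i \<ge> j}" if "S \<in> SS" "j \<le> s" for S j
  proof -
    have "S \<subseteq> {i\<in>D. k i \<ge> j}" using that by (auto simp: SS_def Dt_def t_def)
    then have "card S \<le> card {i\<in>D. k i \<ge> j}" using fD by (intro card_mono) auto
    then show ?thesis using that by (simp add: SS_def)
  qed
  define Y where "Y = (\<Prod>j=1..s. int_choose (int (card {i\<in>D. k i \<ge> j}) - int (\<Sum>i=j+1..t. l i)) (l j))"
  have FS: "FF (D - S) s k l = Y" if "S \<in> SS" for S
    unfolding FF_def Y_def
  proof (rule prod.cong[OF refl])
    fix j assume j: "j \<in> {1..s}"
    have "(\<Sum>i=j+1..t. l i) = (\<Sum>i=j+1..s. l i) + l t" using j by (simp add: t_def)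
    then show "int_choose (int (card {i\<in>D - S. k i \<ge> j}) - int (\<Sum>i=j+1..s. l i)) (l j)
      = int_choose (int (card {i\<in>D. k i \<ge> j}) - int (\<Sum>i=j+1..t. l i)) (l j)"
    proof -
      have e: "int (card {i\<in>D - S. k i \<ge> j}) - int (\<Sum>i=j+1..s. l i) = int (card {i\<in>D. k i \<ge> j}) - int (\<Sum>i=j+1..t. l i)"
        using cardD[OF that, of j] cle[OF that, of j] j \<open>(\<Sum>i=j+1..t. l i) = (\<Sum>i=j+1..s. l i) + l t\<close>
        by (simp add: of_nat_diff)
      show ?thesis by (simp only: e)
    qed
  qed
  have "card (R D t k l) = (\<Sum>S\<in>SS. card (g S ` R (D - S) s k l))"
    unfolding eq
  proof (rule card_UN_disjoint[OF fSS])
    show "\<forall>S\<in>SS. finite (g S ` R (D - S) s k l)" using fD by (auto intro: finite_imageI finite_R)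
    show "\<forall>S1\<in>SS. \<forall>S2\<in>SS. S1 \<noteq> S2 \<longrightarrow> g S1 ` R (D - S1) s k l \<inter> g S2 ` R (D - S2) s k l = {}"
    proof (intro ballI impI)
      fix S1 S2 assume a: "S1 \<in> SS" "S2 \<in> SS" "S1 \<noteq> S2"
      show "g S1 ` R (D - S1) s k l \<inter> g S2 ` R (D - S2) s k l = {}"
      proof (rule ccontr)
        assume "g S1 ` R (D - S1) s k l \<inter> g S2 ` R (D - S2) s k l \<noteq> {}"
        then obtain r1 r2 where r: "r1 \<in> R (D - S1) s k l" "r2 \<in> R (D - S2) s k l" "g S1 r1 = g S2 r2"
          by blast
        have "S1 = {i\<in>D. g S1 r1 i = t}" using lev[OF a(1) r(1)] by simp
        also have "\<dots> = {i\<in>D. g S2 r2 i = t}" using r(3) by simp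
        also have "\<dots> = S2" using lev[OF a(2) r(2)] by simp
        finally show False using a(3) by simp
      qed
    qed
  qed
  also have "\<dots> = (\<Sum>S\<in>SS. Y)"
    by (rule sum.cong[OF refl]) (simp add: card_image inj Suc.IH fD FS)
  also have "\<dots> = card SS * Y" by simp
  also have "card SS = card Dt choose l t" unfolding SS_def by (rule n_subsets[OF fDt])
  also have "(card Dt choose l t) * Y = FF D t k l"
  proof -
    have "FF D t k l = int_choose (int (card Dt) - int (\<Sum>i=t+1..t. l i)) (l t) * Y"
      unfolding FF_def Y_def Dt_def t_def by (rule prod.nat_ivl_Suc') simp
    then show ?thesis by (simp add: int_choose_def)
  qed
  finally show ?case by (simp add: t_def)
qed



lemma count_gen: "count (gen_mset n k) i = (if i \<in> {1..n} then k i else 0)"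
  by (simp add: gen_mset_def count_sum)

lemma size_sum_mset: "finite A \<Longrightarrow> size (sum f A :: 'a multiset) = (\<Sum>a\<in>A. size (f a))"
  by (induct rule: finite_induct) auto

lemma size_gen: "size (gen_mset n k) = (\<Sum>i=1..n. k i)"
  by (simp add: gen_mset_def size_sum_mset)

lemma sum_levels:
  assumes "finite D" "\<forall>i\<in>D. r i \<le> s"
  shows "(\<Sum>i\<in>D. r i) = (\<Sum>j=1..s. j * card {i\<in>D. r i = j})"
proof -
  have "(\<Sum>j=1..s. j * card {i\<in>D. r i = j}) = (\<Sum>j=1..s. \<Sum>i\<in>D. if r i = j then j else 0)"
  proof (rule sum.cong[OF refl])
    fix j
    have "(\<Sum>i\<in>{i\<in>D. r i = j}. j) = (\<Sum>i\<in>D. if r i = j then j else 0)"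
      by (rule sum.inter_filter[OF assms(1)])
    then show "j * card {i\<in>D. r i = j} = (\<Sum>i\<in>D. if r i = j then j else 0)" by (simp add: mult.commute)
  qed
  also have "\<dots> = (\<Sum>i\<in>D. \<Sum>j=1..s. if r i = j then j else 0)" by (rule sum.swap)
  also have "\<dots> = (\<Sum>i\<in>D. r i)"
  proof (rule sum.cong[OF refl])
    fix i assume "i \<in> D"
    then have "r i \<le> s" using assms(2) by blast
    then show "(\<Sum>j=1..s. if r i = j then j else 0) = r i" by auto
  qed
  finally show ?thesis by simp
qed

lemma finite_all_solutions: "finite (all_solutions s m)"
proof (rule finite_subset[OF _ finite_bfun[of "{1..s}" m]])
  show "all_solutions s m \<subseteq> {r. (\<forall>i. i \<notin> {1..s} \<longrightarrow> r i = 0) \<and> (\<forall>i\<in>{1..s}. r i \<le> m)}"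
  proof
    fix l assume l: "l \<in> all_solutions s m"
    have "\<forall>i\<in>{1..s}. l i \<le> m"
    proof
      fix i assume i: "i \<in> {1..s}"
      have "l i \<le> i * l i" using i by simp
      also have "\<dots> \<le> (\<Sum>i=1..s. i * l i)" using i by (intro member_le_sum) auto
      finally show "l i \<le> m" using l by (simp add: all_solutions_def)
    qed
    then show "l \<in> {r. (\<forall>i. i \<notin> {1..s} \<longrightarrow> r i = 0) \<and> (\<forall>i\<in>{1..s}. r i \<le> m)}"
      using l by (simp add: all_solutions_def)
  qed
qed simp

lemma card_C_gen:
  assumes "\<forall>i\<in>{1..n}. min (k i) m \<le> s"
  shows "card (C m (gen_mset n k)) = (\<Sum>l\<in>all_solutions s m. FF {1..n} s k l)"
proof -
  define D where "D = {1..n}"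
  define T where "T = {r. (\<forall>i. i \<notin> D \<longrightarrow> r i = 0) \<and> (\<forall>i\<in>D. r i \<le> k i) \<and> (\<Sum>i\<in>D. r i) = m}"
  have fD: "finite D" by (simp add: D_def)
  have sizeB: "size B = (\<Sum>i\<in>D. count B i)" if "\<forall>i. i \<notin> D \<longrightarrow> count B i = 0" for B
  proof -
    have "B = gen_mset n (count B)"
      using that by (intro multiset_eqI) (auto simp: count_gen D_def)
    then have "size B = size (gen_mset n (count B))" by simp
    then show ?thesis by (simp add: size_gen D_def)
  qed
  have img: "count ` C m (gen_mset n k) = T"
  proof
    show "count ` C m (gen_mset n k) \<subseteq> T"
    proof safe
      fix B assume "B \<in> C m (gen_mset n k)"
      then have B: "B \<subseteq># gen_mset n k" "size B = m" by (auto simp: C_def)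
      have le: "count B i \<le> (if i \<in> D then k i else 0)" for i
      proof -
        have "count B i \<le> count (gen_mset n k) i" using B(1) by (simp add: subseteq_mset_def)
        then show ?thesis by (simp add: count_gen D_def)
      qed
      have z: "\<forall>i. i \<notin> D \<longrightarrow> count B i = 0"
      proof (intro allI impI)
        fix i assume "i \<notin> D" then show "count B i = 0" using le[of i] by simp
      qed
      have lek: "\<forall>i\<in>D. count B i \<le> k i"
      proof
        fix i assume "i \<in> D" then show "count B i \<le> k i" using le[of i] by simp
      qed
      have "(\<Sum>i\<in>D. count B i) = m" using sizeB[OF z] B(2) by simp
      then show "count B \<in> T" unfolding T_def using z lek by blast
    qed
  next
    show "T \<subseteq> count ` C m (gen_mset n k)"
    proof
      fix r assume r: "r \<in> T"
      define B where "B = gen_mset n r"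
      have cB: "count B = r" using r by (auto simp: fun_eq_iff B_def count_gen T_def D_def)
      have "B \<subseteq># gen_mset n k" using r cB
        by (auto simp: subseteq_mset_def count_gen T_def D_def)
      moreover have "size B = m" using sizeB[of B] cB r by (simp add: T_def)
      ultimately have "B \<in> C m (gen_mset n k)" by (simp add: C_def)
      then show "r \<in> count ` C m (gen_mset n k)" using cB by force
    qed
  qed
  have "card (C m (gen_mset n k)) = card T"
    using img inj_on_def multiset_eqI card_image by (metis (no_types, lifting) inj_onI)
  also have "T = (\<Union>l\<in>all_solutions s m. R D s k l)"
  proof
    show "T \<subseteq> (\<Union>l\<in>all_solutions s m. R D s k l)"
    proof
      fix r assume r: "r \<in> T"
      have rs: "\<forall>i\<in>D. r i \<le> s"
      proof
        fix i assume i: "i \<in> D"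
        have "r i \<le> (\<Sum>i\<in>D. r i)" using fD i by (intro member_le_sum) auto
        then have "r i \<le> m" using r by (simp add: T_def)
        moreover have "r i \<le> k i" using r i by (simp add: T_def)
        ultimately show "r i \<le> s" using assms i by (force simp: D_def)
      qed
      define l where "l = (\<lambda>j. if j \<in> {1..s} then card {i\<in>D. r i = j} else 0)"
      have "(\<Sum>j=1..s. j * l j) = (\<Sum>j=1..s. j * card {i\<in>D. r i = j})"
        by (rule sum.cong) (auto simp: l_def)
      also have "\<dots> = m" using sum_levels[OF fD rs] r by (simp add: T_def)
      finally have "l \<in> all_solutions s m" by (auto simp: all_solutions_def l_def)
      moreover have "r \<in> R D s k l" using r rs by (auto simp: R_def T_def l_def)
      ultimately show "r \<in> (\<Union>l\<in>all_solutions s m. R D s k l)" by blast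
    qed
  next
    show "(\<Union>l\<in>all_solutions s m. R D s k l) \<subseteq> T"
    proof safe
      fix l r assume l: "l \<in> all_solutions s m" and r: "r \<in> R D s k l"
      have rs: "\<forall>i\<in>D. r i \<le> s" using r by (simp add: R_def)
      have "(\<Sum>i\<in>D. r i) = (\<Sum>j=1..s. j * card {i\<in>D. r i = j})" by (rule sum_levels[OF fD rs])
      also have "\<dots> = (\<Sum>j=1..s. j * l j)" using r by (intro sum.cong) (auto simp: R_def)
      also have "\<dots> = m" using l by (simp add: all_solutions_def)
      finally show "r \<in> T" using r by (auto simp: T_def R_def)
    qed
  qed
  also have "card (\<Union>l\<in>all_solutions s m. R D s k l) = (\<Sum>l\<in>all_solutions s m. card (R D s k l))"
  proof (rule card_UN_disjoint[OF finite_all_solutions])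
    show "\<forall>l\<in>all_solutions s m. finite (R D s k l)" using fD finite_R by blast
    show "\<forall>l1\<in>all_solutions s m. \<forall>l2\<in>all_solutions s m. l1 \<noteq> l2 \<longrightarrow> R D s k l1 \<inter> R D s k l2 = {}"
    proof (intro ballI impI)
      fix l1 l2 assume a: "l1 \<in> all_solutions s m" "l2 \<in> all_solutions s m" "l1 \<noteq> l2"
      then obtain j where j: "l1 j \<noteq> l2 j" by (auto simp: fun_eq_iff)
      then have "j \<in> {1..s}" using a by (auto simp: all_solutions_def)
      then show "R D s k l1 \<inter> R D s k l2 = {}" using j by (auto simp: R_def)
    qed
  qed
  also have "\<dots> = (\<Sum>l\<in>all_solutions s m. FF {1..n} s k l)" by (simp add: card_R fD D_def)
  finally show ?thesis .
qed


lemma floor_ceil_aux: "\<lfloor>real n - max 1 x\<rfloor> = int n - max 1 \<lceil>x\<rceil>"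
proof -
  have "\<lfloor>real n - max 1 x\<rfloor> = int n - \<lceil>max 1 x\<rceil>"
  proof -
    have "real n - max 1 x = - max 1 x + real_of_int (int n)" by simp
    then have "\<lfloor>real n - max 1 x\<rfloor> = \<lfloor>- max 1 x\<rfloor> + int n" by (simp only: floor_add_int)
    then show ?thesis by (simp add: ceiling_def)
  qed
  moreover have "\<lceil>max 1 x\<rceil> = max 1 \<lceil>x\<rceil>"
    by (cases "x \<le> 1") (auto simp: max_def ceiling_le_iff le_ceiling_iff, linarith+)
  ultimately show ?thesis by simp
qed

lemma kbar_lin:
  assumes "p \<ge> 1" "1 \<le> j" "int j \<le> int p * int n + q"
  shows "int (kbar n (lin_k p q) j) = \<lfloor>real n - max 1 (real_of_int (int j - q) / real p)\<rfloor> + 1"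
proof -
  define x where "x = real_of_int (int j - q) / real p"
  define c where "c = max 1 \<lceil>x\<rceil>"
  have pp: "real p > 0" using assms(1) by simp
  have iff: "lin_k p q i \<ge> j \<longleftrightarrow> \<lceil>x\<rceil> \<le> int i" for i
  proof -
    have "lin_k p q i \<ge> j \<longleftrightarrow> int p * int i + q \<ge> int j"
      using assms(2) by (auto simp: lin_k_def)
    also have "\<dots> \<longleftrightarrow> int j - q \<le> int p * int i" by linarith
    also have "\<dots> \<longleftrightarrow> real_of_int (int j - q) \<le> real_of_int (int p * int i)" by (simp only: of_int_le_iff)
    also have "\<dots> \<longleftrightarrow> real_of_int (int j - q) \<le> real p * real i" by simp
    also have "\<dots> \<longleftrightarrow> x \<le> real i" using pp by (simp add: x_def divide_le_eq mult.commute)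
    also have "\<dots> \<longleftrightarrow> \<lceil>x\<rceil> \<le> int i" by (simp add: ceiling_le_iff)
    finally show ?thesis .
  qed
  have c1: "c \<ge> 1" by (simp add: c_def)
  have xn: "x \<le> real n"
  proof -
    have "int j - q \<le> int p * int n" using assms(3) by linarith
    then have "real_of_int (int j - q) \<le> real_of_int (int p * int n)" by (simp only: of_int_le_iff)
    then have "real_of_int (int j - q) \<le> real p * real n" by simp
    then show ?thesis using pp by (simp add: x_def divide_le_eq mult.commute)
  qed
  have "{i\<in>{1..n}. lin_k p q i \<ge> j} = {nat c..n}"
    using c1 by (auto simp: iff c_def)
  then have "kbar n (lin_k p q) j = Suc n - nat c" by (simp add: kbar_def)
  moreover have "c \<le> int n + 1"
  proof -
    have "\<lceil>x\<rceil> \<le> int n" using xn by (simp add: ceiling_le_iff)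
    then show ?thesis by (simp add: c_def)
  qed
  ultimately have "int (kbar n (lin_k p q) j) = int n + 1 - c" using c1 by simp
  then show ?thesis by (simp add: floor_ceil_aux c_def x_def)
qed


lemma FF_zero:
  assumes "l \<in> all_solutions s m" "l \<notin> Lambda s m n k"
  shows "FF {1..n} s k l = 0"
proof -
  from assms obtain j where j: "j \<in> {1..s}" and gt: "(\<Sum>i=j..s. l i) > kbar n k j"
    by (auto simp: Lambda_def all_solutions_def not_le)
  have "(\<Sum>i=j..s. l i) = l j + (\<Sum>i=j+1..s. l i)" using j by (simp add: sum.atLeast_Suc_atMost)
  then have "int (kbar n k j) - int (\<Sum>i=j+1..s. l i) < int (l j)" using gt by linarith
  then have "int_choose (int (card {i\<in>{1..n}. k i \<ge> j}) - int (\<Sum>i=j+1..s. l i)) (l j) = 0"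
    by (auto simp: int_choose_def kbar_def)
  then show ?thesis unfolding FF_def using j by (intro prod_zero) auto
qed

theorem theorem4p4:
  fixes n p m :: nat and q :: int
  assumes "n \<ge> 1" and "p \<ge> 1" and "int p + q \<ge> 1"
  defines "s \<equiv> nat (min (int m) (int p * int n + q))"
  shows "card (C m (linear_mset n p q))
           = (\<Sum>l\<in>Lambda s m n (lin_k p q). lin_term n p q s l)
         \<and> (m \<le> n \<longrightarrow> card (C m (linear_mset n p q))
           = (\<Sum>l\<in>all_solutions s m. lin_term n p q s l))"
proof -
  have pos: "int p * int n + q \<ge> 1"
  proof -
    have "int p * int n \<ge> int p * 1" using assms(1) by (intro mult_left_mono) auto
    then show ?thesis using assms(3) by simp
  qed
  have hyp: "\<forall>i\<in>{1..n}. min (lin_k p q i) m \<le> s"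
  proof
    fix i assume i: "i \<in> {1..n}"
    have "int p * int i \<le> int p * int n" using i by (intro mult_left_mono) auto
    then have "lin_k p q i \<le> nat (int p * int n + q)" unfolding lin_k_def by linarith
    then show "min (lin_k p q i) m \<le> s" unfolding s_def by linarith
  qed
  have sle: "int s \<le> int p * int n + q" using pos unfolding s_def by linarith
  have FFeq: "FF {1..n} s (lin_k p q) l = lin_term n p q s l" for l
    unfolding FF_def lin_term_def
  proof (rule prod.cong[OF refl])
    fix j assume j: "j \<in> {1..s}"
    have "int (card {i\<in>{1..n}. lin_k p q i \<ge> j}) = \<lfloor>real n - max 1 (real_of_int (int j - q) / real p)\<rfloor> + 1"
      using kbar_lin[OF assms(2), of j n q] j sle unfolding kbar_def by auto
    then show "int_choose (int (card {i\<in>{1..n}. lin_k p q i \<ge> j}) - int (\<Sum>i=j+1..s. l i)) (l j) =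
         int_choose (\<lfloor>real n - max 1 (real_of_int (int j - q) / real p)\<rfloor> + 1 - int (\<Sum>i=j+1..s. l i)) (l j)"
      by simp
  qed
  have main: "card (C m (linear_mset n p q)) = (\<Sum>l\<in>all_solutions s m. lin_term n p q s l)"
  proof -
    have fe: "FF {1..n} s (lin_k p q) = lin_term n p q s" using FFeq by (intro ext)
    show ?thesis using card_C_gen[OF hyp] unfolding linear_mset_def fe .
  qed
  have "(\<Sum>l\<in>Lambda s m n (lin_k p q). lin_term n p q s l) = (\<Sum>l\<in>all_solutions s m. lin_term n p q s l)"
  proof (rule sum.mono_neutral_left[OF finite_all_solutions])
    show "Lambda s m n (lin_k p q) \<subseteq> all_solutions s m" by (auto simp: Lambda_def all_solutions_def)
    show "\<forall>l\<in>all_solutions s m - Lambda s m n (lin_k p q). lin_term n p q s l = 0"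
      using FF_zero FFeq by (metis DiffE)
  qed
  then show ?thesis using main by simp
qed

end
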